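(* Let $m\ge 1$ and $n\ge m$. Let $\mathcal{A}$ be any deterministic adaptive procedure that makes at most $2^m-2$ oracle queries, each query being a string $\mathbf{y}\in\{0,1\}^m$ answered by whether $\mathbf{y}\in C(f)$. Then there exist fully balanced functions $f,g:\{0,1\}^n\to\{0,1\}^m$ with $\dim\operatorname{img}(f)=m$ and $\dim\operatorname{img}(g)=m-1$ such that $\mathcal{A}$ makes the same queries and receives the same answers on $f$ as on $g$. In particular, no such procedure distinguishes the cases $r=m-1$ and $r=m$ with certainty using fewer than $2^m-1$ queries.
   Context: Strings in $\{0,1\}^k$ are identified with vectors of $\mathbb{F}_2^k$; $\mathbf{a}\cdot\mathbf{b}=\bigoplus_i a_ib_i$ (mod 2). $f$ is $\mathbf{y}$-balanced if $f(\mathbf{x})\cdot\mathbf{y}=0$ for exactly half of the $\mathbf{x}$ and $=1$ for the other half, and $\mathbf{y}$-constant if $f(\mathbf{x})\cdot\mathbf{y}$ is the same for all $\mathbf{x}$. $f$ is fully balanced if for every $\mathbf{y}$ it is $\mathbf{y}$-balanced or $\mathbf{y}$-constant; then $\operatorname{img}(f)$ is an affine subspace, and $r$ denotes its dimension. $C(f)=\{\mathbf{y}: f\text{ is }\mathbf{y}\text{-constant}\}$. A query corresponds to one run of the Generalised Phase Kick-Back algorithm with marker $\mathbf{y}$, whose output is $\mathbf{0}$ exactly when $f$ is $\mathbf{y}$-constant (for fully balanced $f$); a marker selection algorithm only uses whether this output is $\mathbf{0}$. *)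

theory Defs
  imports Main
begin

text \<open>Bit strings in {0,1}^k are boolean lists of length k, viewed as vectors of F_2^k
  (True = 1, coordinate-wise XOR = vector addition).\<close>

definition bvecs :: "nat \<Rightarrow> bool list set" where
  "bvecs k = {xs. length xs = k}"

definition dotp :: "bool list \<Rightarrow> bool list \<Rightarrow> bool" where
  "dotp a b = odd (length (filter id (map2 (\<and>) a b)))"

definition xorv :: "bool list \<Rightarrow> bool list \<Rightarrow> bool list" where
  "xorv a b = map2 (\<noteq>) a b"

definition y_balanced :: "nat \<Rightarrow> (bool list \<Rightarrow> bool list) \<Rightarrow> bool list \<Rightarrow> bool" where
  "y_balanced n f y \<longleftrightarrow> 2 * card {x \<in> bvecs n. dotp (f x) y} = 2 ^ n"

definition y_constant :: "nat \<Rightarrow> (bool list \<Rightarrow> bool list) \<Rightarrow> bool list \<Rightarrow> bool" where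
  "y_constant n f y \<longleftrightarrow> (\<forall>x\<in>bvecs n. \<forall>x'\<in>bvecs n. dotp (f x) y = dotp (f x') y)"

definition fully_balanced :: "nat \<Rightarrow> nat \<Rightarrow> (bool list \<Rightarrow> bool list) \<Rightarrow> bool" where
  "fully_balanced n m f \<longleftrightarrow> (\<forall>x\<in>bvecs n. f x \<in> bvecs m) \<and>
     (\<forall>y\<in>bvecs m. y_balanced n f y \<or> y_constant n f y)"

definition constset :: "nat \<Rightarrow> nat \<Rightarrow> (bool list \<Rightarrow> bool list) \<Rightarrow> bool list set" where
  "constset n m f = {y \<in> bvecs m. y_constant n f y}"

definition img :: "nat \<Rightarrow> (bool list \<Rightarrow> bool list) \<Rightarrow> bool list set" where
  "img n f = f ` bvecs n"

text \<open>Linear independence over F_2 of a finite set S of vectors in F_2^m: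
  no nonempty subset has XOR-sum zero (the i-th coordinate of the XOR-sum of T is the parity of
  the number of vectors of T whose i-th coordinate is 1).\<close>
definition f2_indep :: "nat \<Rightarrow> bool list set \<Rightarrow> bool" where
  "f2_indep m S \<longleftrightarrow> finite S \<and>
     (\<forall>T\<subseteq>S. T \<noteq> {} \<longrightarrow> (\<exists>i<m. odd (card {v\<in>T. v ! i})))"

definition f2_dim :: "nat \<Rightarrow> bool list set \<Rightarrow> nat" where
  "f2_dim m V = Max {card S | S. S \<subseteq> V \<and> f2_indep m S}"

definition aff_dim :: "nat \<Rightarrow> bool list set \<Rightarrow> nat" where
  "aff_dim m A = f2_dim m {xorv u v | u v. u \<in> A \<and> v \<in> A}"

text \<open>A deterministic adaptive query procedure: given the list of answers received so far
  (which determines the earlier queries), it either stops (None) or issues the next query.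
  transcript A orc q h runs it for at most q further queries against oracle orc,
  returning the list of (query, answer) pairs.\<close>
fun transcript :: "(bool list \<Rightarrow> bool list option) \<Rightarrow> (bool list \<Rightarrow> bool) \<Rightarrow> nat
                    \<Rightarrow> bool list \<Rightarrow> (bool list \<times> bool) list" where
  "transcript A orc 0 h = []"
| "transcript A orc (Suc k) h =
     (case A h of None \<Rightarrow> []
      | Some y \<Rightarrow> (y, orc y) # transcript A orc k (h @ [orc y]))"

end

theory Submission imports Defs begin

definition zero :: "nat \<Rightarrow> bool list" where "zero m = replicate m False"
definition unit :: "nat \<Rightarrow> nat \<Rightarrow> bool list" where "unit m j = (replicate m False)[j := True]"

lemma dotp_Nil1[simp]: "dotp [] b = False" by (simp add: dotp_def)
lemma dotp_Nil2[simp]: "dotp a [] = False" by (simp add: dotp_def)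
lemma dotp_Cons[simp]: "dotp (a#as) (b#bs) = ((a \<and> b) \<noteq> dotp as bs)"
  by (cases "a \<and> b") (auto simp: dotp_def)

lemma dotp_card: "length a = length b \<Longrightarrow> dotp a b = odd (card {k. k < length a \<and> a!k \<and> b!k})"
proof -
  assume "length a = length b"
  hence "{i. i < length a \<and> i < length b \<and> map2 (\<and>) a b ! i} = {k. k < length a \<and> a!k \<and> b!k}" by auto
  thus ?thesis by (simp add: dotp_def length_filter_conv_card)
qed

lemma xorv_Cons[simp]: "xorv (a#as) (b#bs) = (a \<noteq> b) # xorv as bs" by (simp add: xorv_def)
lemma xorv_Nil[simp]: "xorv [] b = []" "xorv a [] = []" by (simp_all add: xorv_def)
lemma length_xorv[simp]: "length (xorv a b) = min (length a) (length b)" by (simp add: xorv_def)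

lemma dotp_xorv_r: "length a = length b \<Longrightarrow> length b = length c \<Longrightarrow> dotp a (xorv b c) = (dotp a b \<noteq> dotp a c)"
  by (induction a b c rule: list_induct3) auto
lemma dotp_xorv_l: "length a = length b \<Longrightarrow> length b = length c \<Longrightarrow> dotp (xorv a b) c = (dotp a c \<noteq> dotp b c)"
  by (induction a b c rule: list_induct3) auto

lemma dotp_zero_r[simp]: "dotp a (replicate k False) = False"
proof (induction a arbitrary: k)
  case (Cons x xs) thus ?case by (cases k) auto
qed simp
lemma dotp_zero_l[simp]: "dotp (replicate k False) b = False"
proof (induction b arbitrary: k)
  case (Cons x xs) thus ?case by (cases k) auto
qed simp

lemma xorv_zero: "length a = k \<Longrightarrow> xorv a (replicate k False) = a"
  by (induction a arbitrary: k) (auto simp: xorv_def)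

lemma xorv_eq_zero: "length a = length b \<Longrightarrow> xorv a b = replicate (length a) False \<Longrightarrow> a = b"
  by (induction a b rule: list_induct2) auto

lemma nth_unit: "j < m \<Longrightarrow> k < m \<Longrightarrow> unit m j ! k = (k = j)"
  by (auto simp: unit_def nth_list_update)
lemma length_unit[simp]: "length (unit m j) = m" by (simp add: unit_def)

lemma dotp_unit_l: "length y = m \<Longrightarrow> j < m \<Longrightarrow> dotp (unit m j) y = y!j"
proof -
  assume a: "length y = m" "j < m"
  have "{k. k < length (unit m j) \<and> unit m j!k \<and> y!k} = (if y!j then {j} else {})"
    using a by (auto simp: nth_unit)
  thus ?thesis using a by (simp add: dotp_card)
qed

lemma flip_xorv: "length a = m \<Longrightarrow> j < m \<Longrightarrow> a[j := \<not> a!j] = xorv a (unit m j)"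
  by (auto simp: list_eq_iff_nth_eq nth_list_update xorv_def nth_unit)

lemma finite_bvecs[simp]: "finite (bvecs n)"
proof -
  have "bvecs n = {xs. set xs \<subseteq> (UNIV::bool set) \<and> length xs = n}" by (auto simp: bvecs_def)
  thus ?thesis using finite_lists_length_eq[of "UNIV::bool set" n] by simp
qed

lemma card_bvecs: "card (bvecs n) = 2^n"
proof -
  have "bvecs n = {xs. set xs \<subseteq> (UNIV::bool set) \<and> length xs = n}" by (auto simp: bvecs_def)
  thus ?thesis using card_lists_length_eq[of "UNIV::bool set" n] by simp
qed

lemma flip_balance:
  assumes "j < n" "\<And>x. x \<in> bvecs n \<Longrightarrow> P (x[j := \<not> x!j]) = (\<not> P x)"
  shows "2 * card {x\<in>bvecs n. P x} = 2^n"
proof -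
  let ?fl = "\<lambda>x::bool list. x[j := \<not> x!j]"
  have inv: "\<And>x. x \<in> bvecs n \<Longrightarrow> ?fl (?fl x) = x" using assms(1)
    by (auto simp: bvecs_def list_eq_iff_nth_eq nth_list_update)
  have inb: "\<And>x. x \<in> bvecs n \<Longrightarrow> ?fl x \<in> bvecs n" by (simp add: bvecs_def)
  have "bij_betw ?fl {x\<in>bvecs n. P x} {x\<in>bvecs n. \<not> P x}"
  proof (rule bij_betw_byWitness[where f'="?fl"])
    show "\<forall>a\<in>{x \<in> bvecs n. P x}. ?fl (?fl a) = a" using inv by auto
    show "\<forall>a'\<in>{x \<in> bvecs n. \<not> P x}. ?fl (?fl a') = a'" using inv by auto
    show "?fl ` {x \<in> bvecs n. P x} \<subseteq> {x \<in> bvecs n. \<not> P x}" using inb assms(2) by auto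
    show "?fl ` {x \<in> bvecs n. \<not> P x} \<subseteq> {x \<in> bvecs n. P x}" using inb assms(2) by auto
  qed
  hence c: "card {x\<in>bvecs n. P x} = card {x\<in>bvecs n. \<not> P x}" by (rule bij_betw_same_card)
  have "card {x\<in>bvecs n. P x} + card {x\<in>bvecs n. \<not> P x} = card (bvecs n)"
    by (subst card_Un_disjoint[symmetric]) (auto intro: arg_cong[where f=card])
  thus ?thesis using c card_bvecs by simp
qed

lemma nonzero_has_true: "z \<in> bvecs m \<Longrightarrow> z \<noteq> zero m \<Longrightarrow> \<exists>j<m. z!j"
  by (auto simp: bvecs_def zero_def list_eq_iff_nth_eq)

lemma const_or_bal:
  assumes z: "z \<in> bvecs m" and mn: "m \<le> n"
    and F: "\<And>x. x \<in> bvecs n \<Longrightarrow> dotp (F x) y = dotp (take m x) z"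
  shows "(z = zero m \<longrightarrow> y_constant n F y) \<and>
         (z \<noteq> zero m \<longrightarrow> y_balanced n F y \<and> \<not> y_constant n F y)"
proof (intro conjI impI)
  assume "z = zero m"
  thus "y_constant n F y" using F by (simp add: y_constant_def zero_def)
next
  assume nz: "z \<noteq> zero m"
  then obtain j where j: "j < m" "z!j" using nonzero_has_true z by blast
  have lz: "length z = m" using z by (simp add: bvecs_def)
  have key: "\<And>x. x \<in> bvecs n \<Longrightarrow> dotp (take m (x[j := \<not> x!j])) z = (\<not> dotp (take m x) z)"
  proof -
    fix x assume x: "x \<in> bvecs n"
    hence lt: "length (take m x) = m" using mn by (simp add: bvecs_def)
    have "take m (x[j := \<not> x!j]) = (take m x)[j := \<not> (take m x)!j]"
      using j by (simp add: take_update_swap)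
    also have "\<dots> = xorv (take m x) (unit m j)" using flip_xorv[OF lt j(1)] .
    finally show "dotp (take m (x[j := \<not> x!j])) z = (\<not> dotp (take m x) z)"
      using dotp_xorv_l[of "take m x" "unit m j" z] lt lz dotp_unit_l[OF lz j(1)] j by simp
  qed
  have "2 * card {x\<in>bvecs n. dotp (F x) y} = 2 * card {x\<in>bvecs n. dotp (take m x) z}"
    using F by (metis (mono_tags, lifting) Collect_cong)
  also have "\<dots> = 2^n"
    by (rule flip_balance) (use j mn key in auto)
  finally show "y_balanced n F y" by (simp add: y_balanced_def)
  let ?x0 = "replicate n False" and ?x1 = "(replicate n False)[j := True]"
  have b: "?x0 \<in> bvecs n" "?x1 \<in> bvecs n" by (auto simp: bvecs_def)
  have "take m ?x1 = unit m j" using j mn by (simp add: take_update_swap unit_def)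
  hence "dotp (F ?x1) y" using F[OF b(2)] dotp_unit_l[OF lz j(1)] j by simp
  moreover have "\<not> dotp (F ?x0) y" using F[OF b(1)] by simp
  ultimately show "\<not> y_constant n F y" using b unfolding y_constant_def by blast
qed

definition subsp :: "nat \<Rightarrow> bool list set \<Rightarrow> bool" where
  "subsp m V \<longleftrightarrow> V \<subseteq> bvecs m \<and> zero m \<in> V \<and> (\<forall>u\<in>V. \<forall>v\<in>V. xorv u v \<in> V)"

definition sumv :: "nat \<Rightarrow> bool list set \<Rightarrow> bool list" where
  "sumv m T = map (\<lambda>i. odd (card {v\<in>T. v!i})) [0..<m]"

lemma sumv_empty: "sumv m {} = zero m"
  by (simp add: sumv_def zero_def map_replicate_const)

lemma sumv_insert:
  assumes "finite T" "v \<notin> T" "length v = m"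
  shows "sumv m (insert v T) = xorv (sumv m T) v"
proof -
  have c: "\<And>i. card {w\<in>insert v T. w!i} = card {w\<in>T. w!i} + (if v!i then 1 else 0)"
  proof -
    fix i
    show "card {w\<in>insert v T. w!i} = card {w\<in>T. w!i} + (if v!i then 1 else 0)"
    proof (cases "v!i")
      case True
      hence "{w\<in>insert v T. w!i} = insert v {w\<in>T. w!i}" by auto
      thus ?thesis using True assms by simp
    next
      case False
      hence "{w\<in>insert v T. w!i} = {w\<in>T. w!i}" by auto
      thus ?thesis using False by simp
    qed
  qed
  show ?thesis
  proof (rule nth_equalityI)
    show "length (sumv m (insert v T)) = length (xorv (sumv m T) v)"
      using assms(3) by (simp add: sumv_def)
    fix i assume "i < length (sumv m (insert v T))"
    hence i: "i < m" by (simp add: sumv_def)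
    have "sumv m (insert v T) ! i = odd (card {w\<in>insert v T. w!i})"
      using i unfolding sumv_def by simp
    also have "\<dots> = odd (card {w\<in>T. w!i} + (if v!i then 1 else 0))" by (simp only: c)
    also have "\<dots> = (odd (card {w\<in>T. w!i}) \<noteq> v!i)" by simp
    also have "\<dots> = xorv (sumv m T) v ! i" using i assms(3) by (simp add: sumv_def xorv_def)
    finally show "sumv m (insert v T) ! i = xorv (sumv m T) v ! i" .
  qed
qed

lemma sumv_in: assumes s: "subsp m V" shows "finite T \<Longrightarrow> T \<subseteq> V \<Longrightarrow> sumv m T \<in> V"
proof (induction T rule: finite_induct)
  case empty thus ?case using s by (simp add: sumv_empty subsp_def)
next
  case (insert v T)
  hence "length v = m" using s by (auto simp: subsp_def bvecs_def)
  thus ?case using insert s by (simp add: sumv_insert subsp_def)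
qed

lemma parity_symdiff:
  assumes "finite A" "finite B"
  shows "odd (card ((A - B) \<union> (B - A))) = (odd (card A) \<noteq> odd (card B))"
proof -
  have "card ((A - B) \<union> (B - A)) = card (A - B) + card (B - A)"
    using assms by (intro card_Un_disjoint) auto
  moreover have "card (A - B) = card A - card (A \<inter> B)" using assms
    by (metis card_Diff_subset_Int Diff_Int2 Int_lower2 finite_Int inf_commute)
  moreover have "card (B - A) = card B - card (A \<inter> B)" using assms
    by (metis card_Diff_subset_Int Diff_Int2 Int_lower2 finite_Int inf_commute)
  moreover have "card (A \<inter> B) \<le> card A" "card (A \<inter> B) \<le> card B"
    using assms by (auto intro: card_mono)
  ultimately show ?thesis by presburger
qed

lemma sumv_inj:
  assumes "f2_indep m S"
  shows "inj_on (sumv m) (Pow S)"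
proof (rule inj_onI, rule ccontr)
  fix T1 T2 assume T: "T1 \<in> Pow S" "T2 \<in> Pow S" "sumv m T1 = sumv m T2" "T1 \<noteq> T2"
  have fS: "finite S" using assms by (simp add: f2_indep_def)
  hence f: "finite T1" "finite T2" using T by (auto intro: finite_subset)
  let ?D = "(T1 - T2) \<union> (T2 - T1)"
  have "?D \<subseteq> S" "?D \<noteq> {}" using T by auto
  then obtain i where i: "i < m" "odd (card {v\<in>?D. v!i})"
    using assms unfolding f2_indep_def by blast
  have "odd (card {v\<in>T1. v!i}) = odd (card {v\<in>T2. v!i})"
    using T(3) i(1) unfolding sumv_def by (metis (no_types, lifting) diff_zero length_map length_upt nth_map_upt add_0)
  moreover have "{v\<in>?D. v!i} = ({v\<in>T1. v!i} - {v\<in>T2. v!i}) \<union> ({v\<in>T2. v!i} - {v\<in>T1. v!i})"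
    by auto
  ultimately show False using i(2) parity_symdiff[of "{v\<in>T1. v!i}" "{v\<in>T2. v!i}"] f by simp
qed

lemma indep_bound:
  assumes "subsp m V" "f2_indep m S" "S \<subseteq> V"
  shows "2 ^ card S \<le> card V"
proof -
  have fS: "finite S" using assms by (simp add: f2_indep_def)
  have fV: "finite V" using assms(1) unfolding subsp_def by (meson finite_bvecs finite_subset)
  have "card (Pow S) \<le> card V"
    by (rule card_inj_on_le[OF sumv_inj[OF assms(2)]])
       (use sumv_in[OF assms(1)] assms(3) fS fV in \<open>auto intro: finite_subset\<close>)
  thus ?thesis using fS by (simp add: card_Pow)
qed

lemma f2_dim_eqI:
  assumes "S0 \<subseteq> V" "f2_indep m S0" "card S0 = d"
    and "\<And>S. S \<subseteq> V \<Longrightarrow> f2_indep m S \<Longrightarrow> card S \<le> d"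
  shows "f2_dim m V = d"
proof -
  have fin: "finite {card S | S. S \<subseteq> V \<and> f2_indep m S}"
    by (rule finite_subset[of _ "{..d}"]) (use assms(4) in auto)
  show ?thesis unfolding f2_dim_def
    by (rule Max_eqI[OF fin]) (use assms in auto)
qed

lemma aff_dim_subsp: "subsp m V \<Longrightarrow> aff_dim m V = f2_dim m V"
proof -
  assume s: "subsp m V"
  have "{xorv u v | u v. u \<in> V \<and> v \<in> V} = V"
  proof
    show "{xorv u v | u v. u \<in> V \<and> v \<in> V} \<subseteq> V" using s by (auto simp: subsp_def)
    show "V \<subseteq> {xorv u v | u v. u \<in> V \<and> v \<in> V}"
    proof
      fix u assume u: "u \<in> V"
      hence "u = xorv u (zero m)" using s xorv_zero[of u m] by (auto simp: subsp_def bvecs_def zero_def)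
      thus "u \<in> {xorv u v | u v. u \<in> V \<and> v \<in> V}" using u s by (auto simp: subsp_def)
    qed
  qed
  thus ?thesis by (simp add: aff_dim_def)
qed

lemma indep_family:
  assumes "J \<subseteq> {..<m}" "\<And>j. j \<in> J \<Longrightarrow> b j \<in> bvecs m"
    and "\<And>j k. j \<in> J \<Longrightarrow> k \<in> J \<Longrightarrow> b j ! k = (k = j)"
  shows "f2_indep m (b ` J) \<and> card (b ` J) = card J"
proof
  have fJ: "finite J" using assms(1) finite_subset by blast
  have inj: "inj_on b J"
  proof (rule inj_onI)
    fix j k assume "j \<in> J" "k \<in> J" "b j = b k"
    thus "j = k" using assms(3)[of j j] assms(3)[of k j] by simp
  qed
  show "card (b ` J) = card J" by (rule card_image[OF inj])
  show "f2_indep m (b ` J)" unfolding f2_indep_def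
  proof (intro conjI allI impI)
    show "finite (b ` J)" using fJ by simp
    fix T assume T: "T \<subseteq> b ` J" "T \<noteq> {}"
    then obtain j where j: "j \<in> J" "b j \<in> T" by blast
    have "{v\<in>T. v!j} = {b j}"
    proof
      show "{v\<in>T. v!j} \<subseteq> {b j}" using T(1) assms(3) j(1) by auto
      show "{b j} \<subseteq> {v\<in>T. v!j}" using j assms(3) by auto
    qed
    thus "\<exists>i<m. odd (card {v\<in>T. v!i})" using j assms(1) by auto
  qed
qed

lemma subsp_bvecs: "subsp m (bvecs m)"
  by (auto simp: subsp_def bvecs_def zero_def)

lemma dim_bvecs: "f2_dim m (bvecs m) = m"
proof -
  have fam: "f2_indep m (unit m ` {..<m}) \<and> card (unit m ` {..<m}) = card {..<m::nat}"
    by (rule indep_family) (auto simp: bvecs_def nth_unit)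
  show ?thesis
  proof (rule f2_dim_eqI[of "unit m ` {..<m}"])
    show "unit m ` {..<m} \<subseteq> bvecs m" by (auto simp: bvecs_def)
    show "f2_indep m (unit m ` {..<m})" "card (unit m ` {..<m}) = m" using fam by auto
    fix S assume "S \<subseteq> bvecs m" "f2_indep m S"
    hence "2 ^ card S \<le> (2::nat) ^ m" using indep_bound[OF subsp_bvecs] card_bvecs by metis
    thus "card S \<le> m" using power_le_imp_le_exp by fastforce
  qed
qed

lemma H_facts:
  assumes y0: "y0 \<in> bvecs m" and i: "i < m" "y0!i"
  shows "subsp m {v\<in>bvecs m. \<not> dotp v y0} \<and> f2_dim m {v\<in>bvecs m. \<not> dotp v y0} = m - 1"
proof -
  let ?H = "{v\<in>bvecs m. \<not> dotp v y0}"
  have ly: "length y0 = m" using y0 by (simp add: bvecs_def)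
  have sub: "subsp m ?H" unfolding subsp_def
    by (auto simp: bvecs_def zero_def dotp_xorv_l ly)
  have cH: "2 * card ?H = 2^m"
  proof (rule flip_balance[OF i(1)])
    fix x assume x: "x \<in> bvecs m"
    hence lx: "length x = m" by (simp add: bvecs_def)
    show "(\<not> dotp (x[i := \<not> x!i]) y0) = (\<not> \<not> dotp x y0)"
      using flip_xorv[OF lx i(1)] dotp_xorv_l[of x "unit m i" y0] lx ly dotp_unit_l[OF ly i(1)] i(2)
      by simp
  qed
  have m1: "m \<ge> 1" using i by simp
  hence cH': "card ?H = 2^(m-1)" using cH by (metis Suc_diff_1 less_le_trans mult_left_cancel power_Suc zero_less_one zero_neq_numeral le_imp_less_Suc le_refl)
  define b where "b j = (unit m j)[i := y0!j]" for j
  let ?J = "{..<m} - {i}"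
  have bn: "\<And>j k. j \<in> ?J \<Longrightarrow> k \<in> ?J \<Longrightarrow> b j ! k = (k = j)"
    by (auto simp: b_def nth_list_update nth_unit)
  have bb: "\<And>j. j \<in> ?J \<Longrightarrow> b j \<in> bvecs m" by (simp add: b_def bvecs_def)
  have bH: "\<And>j. j \<in> ?J \<Longrightarrow> b j \<in> ?H"
  proof -
    fix j assume j: "j \<in> ?J"
    have "{k. k < length (b j) \<and> b j ! k \<and> y0 ! k} = (if y0!j then {i, j} else {})"
      using j i by (auto simp: b_def nth_list_update nth_unit)
    hence "\<not> dotp (b j) y0" using j ly by (simp add: dotp_card b_def)
    thus "b j \<in> ?H" using bb j by simp
  qed
  have fam: "f2_indep m (b ` ?J) \<and> card (b ` ?J) = card ?J"
    by (rule indep_family) (use bb bn in auto)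
  have "f2_dim m ?H = m - 1"
  proof (rule f2_dim_eqI[of "b ` ?J"])
    show "b ` ?J \<subseteq> ?H" using bH by blast
    show "f2_indep m (b ` ?J)" using fam by simp
    show "card (b ` ?J) = m - 1" using fam i by simp
    fix S assume "S \<subseteq> ?H" "f2_indep m S"
    hence "2 ^ card S \<le> (2::nat) ^ (m-1)" using indep_bound[OF sub] cH' by metis
    thus "card S \<le> m - 1" using power_le_imp_le_exp by fastforce
  qed
  thus ?thesis using sub by simp
qed

lemma transcript_cong:
  "(\<forall>p\<in>set (transcript A o1 k h). o1 (fst p) = o2 (fst p)) \<Longrightarrow> transcript A o1 k h = transcript A o2 k h"
proof (induction k arbitrary: h)
  case (Suc k) thus ?case by (cases "A h") auto
qed simp

lemma transcript_len: "length (transcript A o1 k h) \<le> k"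
proof (induction k arbitrary: h)
  case (Suc k) thus ?case by (cases "A h") auto
qed simp

lemma transcript_q: "p \<in> set (transcript A o1 k h) \<Longrightarrow> \<exists>h'. A h' = Some (fst p)"
proof (induction k arbitrary: h)
  case (Suc k) thus ?case by (cases "A h") auto
qed simp

theorem mainTheorem11:
  fixes m n :: nat and A :: "bool list \<Rightarrow> bool list option"
  assumes "m \<ge> 1" and "n \<ge> m"
    and "\<And>h y. A h = Some y \<Longrightarrow> y \<in> bvecs m"
  shows "\<exists>f g. fully_balanced n m f \<and> fully_balanced n m g
     \<and> aff_dim m (img n f) = m \<and> aff_dim m (img n g) = m - 1
     \<and> transcript A (\<lambda>y. y \<in> constset n m f) (2 ^ m - 2) []
       = transcript A (\<lambda>y. y \<in> constset n m g) (2 ^ m - 2) []"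
proof -
  note m1 = assms(1) and mn = assms(2)
  define f where "f x = take m x" for x :: "bool list"
  have fb: "\<And>x. x \<in> bvecs n \<Longrightarrow> f x \<in> bvecs m" using mn by (simp add: f_def bvecs_def)
  have cof: "\<And>y. y \<in> bvecs m \<Longrightarrow> (y = zero m \<longrightarrow> y_constant n f y) \<and>
         (y \<noteq> zero m \<longrightarrow> y_balanced n f y \<and> \<not> y_constant n f y)"
    by (rule const_or_bal) (use mn in \<open>auto simp: f_def\<close>)
  have Cf: "\<And>y. y \<in> bvecs m \<Longrightarrow> (y \<in> constset n m f) = (y = zero m)"
    using cof unfolding constset_def by blast
  have fbal: "fully_balanced n m f" unfolding fully_balanced_def using fb cof by blast
  have imgf: "img n f = bvecs m"
  proof
    show "img n f \<subseteq> bvecs m" using fb by (auto simp: img_def)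
    show "bvecs m \<subseteq> img n f"
    proof
      fix v assume v: "v \<in> bvecs m"
      hence "v = f (v @ replicate (n - m) False)" "v @ replicate (n - m) False \<in> bvecs n"
        using mn by (auto simp: f_def bvecs_def)
      thus "v \<in> img n f" by (auto simp: img_def)
    qed
  qed
  have dimf: "aff_dim m (img n f) = m" using imgf aff_dim_subsp[OF subsp_bvecs] dim_bvecs by simp
  define Q where "Q = fst ` set (transcript A (\<lambda>y. y \<in> constset n m f) (2 ^ m - 2) [])"
  have Qb: "Q \<subseteq> bvecs m" unfolding Q_def using transcript_q assms(3) by fastforce
  have cQ: "card Q \<le> 2^m - 2" unfolding Q_def
    by (meson card_image_le card_length List.finite_set le_trans transcript_len)
  have "bvecs m - {zero m} \<subseteq> Q \<Longrightarrow> False"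
  proof -
    assume "bvecs m - {zero m} \<subseteq> Q"
    hence "card (bvecs m - {zero m}) \<le> card Q" using Qb by (meson card_mono finite_bvecs finite_subset)
    moreover have "card (bvecs m - {zero m}) = 2^m - 1"
    proof -
      have "zero m \<in> bvecs m" by (simp add: zero_def bvecs_def)
      thus ?thesis by (simp add: card_Diff_singleton card_bvecs)
    qed
    moreover have "(2::nat)^m \<ge> 2" using power_increasing[OF m1, of "2::nat"] by simp
    ultimately show False using cQ by linarith
  qed
  then obtain y0 where y0: "y0 \<in> bvecs m" "y0 \<noteq> zero m" "y0 \<notin> Q" by blast
  then obtain i where i: "i < m" "y0!i" using nonzero_has_true by blast
  have ly: "length y0 = m" using y0 by (simp add: bvecs_def)
  let ?H = "{v\<in>bvecs m. \<not> dotp v y0}"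
  define p where "p v = xorv v (if dotp v y0 then unit m i else zero m)" for v
  define g where "g x = p (take m x)" for x :: "bool list"
  have lp: "\<And>v. length v = m \<Longrightarrow> length (p v) = m" by (simp add: p_def zero_def)
  have pdot: "\<And>v y. length v = m \<Longrightarrow> length y = m \<Longrightarrow> dotp (p v) y = (dotp v y \<noteq> (dotp v y0 \<and> y!i))"
    using i by (auto simp: p_def dotp_xorv_l dotp_unit_l zero_def)
  have pH: "\<And>v. v \<in> ?H \<Longrightarrow> p v = v" by (simp add: p_def xorv_zero zero_def bvecs_def)
  have pinH: "\<And>v. v \<in> bvecs m \<Longrightarrow> p v \<in> ?H"
    using pdot lp ly i by (auto simp: bvecs_def)
  define zz where "zz y = (if y!i then xorv y y0 else y)" for y
  have gdot: "\<And>x y. x \<in> bvecs n \<Longrightarrow> y \<in> bvecs m \<Longrightarrow> dotp (g x) y = dotp (take m x) (zz y)"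
    using mn ly by (auto simp: g_def zz_def pdot bvecs_def dotp_xorv_r)
  have zzb: "\<And>y. y \<in> bvecs m \<Longrightarrow> zz y \<in> bvecs m" using ly by (auto simp: zz_def bvecs_def)
  have gb: "\<And>x. x \<in> bvecs n \<Longrightarrow> g x \<in> bvecs m" using mn lp by (simp add: g_def bvecs_def)
  have cog: "\<And>y. y \<in> bvecs m \<Longrightarrow> (zz y = zero m \<longrightarrow> y_constant n g y) \<and>
         (zz y \<noteq> zero m \<longrightarrow> y_balanced n g y \<and> \<not> y_constant n g y)"
    by (rule const_or_bal) (use mn gdot zzb in auto)
  have gbal: "fully_balanced n m g" unfolding fully_balanced_def using gb cog by blast
  have zz0: "\<And>y. y \<in> bvecs m \<Longrightarrow> y \<noteq> y0 \<Longrightarrow> (zz y = zero m) = (y = zero m)"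
  proof -
    fix y assume y: "y \<in> bvecs m" "y \<noteq> y0"
    show "(zz y = zero m) = (y = zero m)"
    proof (cases "y!i")
      case True
      have "y \<noteq> zero m" using True i by (auto simp: zero_def)
      moreover have "xorv y y0 \<noteq> zero m" using xorv_eq_zero[of y y0] y ly by (auto simp: bvecs_def zero_def)
      ultimately show ?thesis using True by (simp add: zz_def)
    qed (simp add: zz_def)
  qed
  have Cg: "\<And>y. y \<in> bvecs m \<Longrightarrow> y \<noteq> y0 \<Longrightarrow> (y \<in> constset n m g) = (y = zero m)"
    using cog zz0 unfolding constset_def by blast
  have imgg: "img n g = ?H"
  proof
    show "img n g \<subseteq> ?H" using pinH mn by (auto simp: img_def g_def bvecs_def)
    show "?H \<subseteq> img n g"
    proof
      fix v assume v: "v \<in> ?H"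
      hence "v = g (v @ replicate (n - m) False)" "v @ replicate (n - m) False \<in> bvecs n"
        using mn pH by (auto simp: g_def bvecs_def)
      thus "v \<in> img n g" by (auto simp: img_def)
    qed
  qed
  have dimg: "aff_dim m (img n g) = m - 1" using imgg aff_dim_subsp H_facts[OF y0(1) i] by simp
  have tr: "transcript A (\<lambda>y. y \<in> constset n m f) (2 ^ m - 2) []
       = transcript A (\<lambda>y. y \<in> constset n m g) (2 ^ m - 2) []"
  proof (rule transcript_cong, intro ballI)
    fix q assume q: "q \<in> set (transcript A (\<lambda>y. y \<in> constset n m f) (2 ^ m - 2) [])"
    hence "fst q \<in> Q" by (simp add: Q_def)
    hence "fst q \<in> bvecs m" "fst q \<noteq> y0" using Qb y0 by auto
    thus "(fst q \<in> constset n m f) = (fst q \<in> constset n m g)" using Cf Cg by simp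
  qed
  show ?thesis using fbal gbal dimf dimg tr by blast
qed

end
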